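(* For any fixed $\varepsilon>0$, uniformly in the root $i\in V$, $$\mathbf P\big(W_\kappa\ge W_{\lfloor2/\varepsilon\rfloor}+\varepsilon\big)=o\Big(\frac1n\Big)\quad\text{as }n\to\infty.$$
   Context: Configuration model: for each $n$, $(d_i^-)_{1\le i\le n}$, $(d_i^+)_{1\le i\le n}$ positive integers with $\sum_id_i^-=\sum_id_i^+=m$; each vertex $i\in V=\{1,\dots,n\}$ carries a set $E_i^+$ of $d_i^+$ tails and a set $E_i^-$ of $d_i^-$ heads; $\omega$ is a uniformly random bijection from tails to heads, $\omega(e)=f$ an arc from the vertex of $e$ to that of $f$. Standing assumption: $\min_i\min(d_i^+,d_i^-)\ge2$ and $\Delta:=\max_i\max(d_i^+,d_i^-)$ bounded uniformly in $n$. Let $h=\lfloor\frac{\ln n}{10\ln\Delta}\rfloor$, $t=t(n)$ a positive integer, $w_{\min}=\frac{\ln n}n$. Exploration from a root $i$: initially $\mathcal T=\mathcal T^0=\{i\}$ and everything unmatched; $\partial_+\mathcal T$ ($\partial_-\mathcal T$) is the set of unmatched tails (heads) whose vertex lies in $\mathcal T$; for $e\in\partial_+\mathcal T$, $\mathbf h(e)$ is the number of vertices on the unique directed path in $\mathcal T$ from $i$ to the vertex of $e$ (inclusive), and $\mathbf w(e)$ the inverse product of their out-degrees. Iterate: select, among $e\in\partial_+\mathcal T$ with $\mathbf h(e)<t-h$ and $\mathbf w(e)>w_{\min}$, one of maximal weight (ties broken by a fixed deterministic order); match it to a uniformly chosen unmatched head $f$; if $f\notin\partial_-\mathcal T$,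 add arc $ef$ and the vertex of $f$ to $\mathcal T$. Stop when no such tail exists; $\kappa$ is the number of pairings, $e_kf_k$ the $k$-th arc formed, $\mathcal T^k$ the tree after $k$ pairings. Define $W_0=0$ and $W_{k+1}=W_k+\mathbf 1_{k<\kappa}\mathbf 1_{f_{k+1}\in\partial_-\mathcal T^k}\mathbf w(e_{k+1})$. *)

theory Defs
  imports "HOL-Probability.Probability"
begin

text \<open>Configuration model.  A tail of vertex i is a pair
(i,a) with a < dout i, a head of vertex j is a pair (j,b) with b < din j; the
vertex of a half-edge is its first component.\<close>

type_synonym halfedge = "nat \<times> nat"

definition tails :: "(nat \<Rightarrow> nat) \<Rightarrow> nat \<Rightarrow> halfedge set" where
  "tails dout n = {(i, a). i \<in> {1..n} \<and> a < dout i}"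

definition heads :: "(nat \<Rightarrow> nat) \<Rightarrow> nat \<Rightarrow> halfedge set" where
  "heads din n = {(j, b). j \<in> {1..n} \<and> b < din j}"

text \<open>Sample space: bijections from tails to heads (extensional), uniformly.\<close>
definition Omega :: "(nat \<Rightarrow> nat) \<Rightarrow> (nat \<Rightarrow> nat) \<Rightarrow> nat \<Rightarrow> (halfedge \<Rightarrow> halfedge) set" where
  "Omega din dout n =
     {\<omega> \<in> tails dout n \<rightarrow>\<^sub>E heads din n. bij_betw \<omega> (tails dout n) (heads din n)}"

definition Delta :: "(nat \<Rightarrow> nat) \<Rightarrow> (nat \<Rightarrow> nat) \<Rightarrow> nat \<Rightarrow> nat" where
  "Delta din dout n = Max (din ` {1..n} \<union> dout ` {1..n})"

definition hpar :: "(nat \<Rightarrow> nat) \<Rightarrow> (nat \<Rightarrow> nat) \<Rightarrow> nat \<Rightarrow> int" where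
  "hpar din dout n = \<lfloor>ln (real n) / (10 * ln (real (Delta din dout n)))\<rfloor>"

definition wmin :: "nat \<Rightarrow> real" where
  "wmin n = ln (real n) / real n"

text \<open>Exploration state: the list of pairings performed so far (tail, head),
the vertex set of the tree, and for each tree vertex v the number of vertices
(hgt v) on the tree path from the root to v and the inverse product (wgt v) of
the out-degrees of these vertices.  For a tail e in the tree boundary,
h(e) = hgt (fst e) and w(e) = wgt (fst e).\<close>
record expl =
  pairs :: "(halfedge \<times> halfedge) list"
  tree :: "nat set"
  hgt :: "nat \<Rightarrow> nat"
  wgt :: "nat \<Rightarrow> real"

definition init :: "(nat \<Rightarrow> nat) \<Rightarrow> nat \<Rightarrow> expl" where
  "init dout i = \<lparr>pairs = [], tree = {i}, hgt = (\<lambda>_. 1), wgt = (\<lambda>_. 1 / real (dout i))\<rparr>"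

definition bdry_out :: "(nat \<Rightarrow> nat) \<Rightarrow> nat \<Rightarrow> expl \<Rightarrow> halfedge set" where
  "bdry_out dout n s = {e \<in> tails dout n. fst e \<in> tree s \<and> e \<notin> fst ` set (pairs s)}"

definition bdry_in :: "(nat \<Rightarrow> nat) \<Rightarrow> nat \<Rightarrow> expl \<Rightarrow> halfedge set" where
  "bdry_in din n s = {f \<in> heads din n. fst f \<in> tree s \<and> f \<notin> snd ` set (pairs s)}"

definition cands ::
  "(nat \<Rightarrow> nat) \<Rightarrow> (nat \<Rightarrow> nat) \<Rightarrow> nat \<Rightarrow> nat \<Rightarrow> expl \<Rightarrow> halfedge set" where
  "cands din dout n t s =
     {e \<in> bdry_out dout n s. int (hgt s (fst e)) < int t - hpar din dout n
                             \<and> wgt s (fst e) > wmin n}"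

definition sel ::
  "(nat \<Rightarrow> nat) \<Rightarrow> (nat \<Rightarrow> nat) \<Rightarrow> nat \<Rightarrow> nat \<Rightarrow> (halfedge \<Rightarrow> nat) \<Rightarrow> expl \<Rightarrow> halfedge" where
  "sel din dout n t rk s =
     (ARG_MIN rk e. e \<in> cands din dout n t s \<and>
        (\<forall>e' \<in> cands din dout n t s. wgt s (fst e') \<le> wgt s (fst e)))"

text \<open>One step of the exploration; the head matched to e is omega e, i.e. the
uniformly chosen unmatched head is revealed from the uniform bijection.\<close>
definition step ::
  "(nat \<Rightarrow> nat) \<Rightarrow> (nat \<Rightarrow> nat) \<Rightarrow> nat \<Rightarrow> nat \<Rightarrow> (halfedge \<Rightarrow> nat)
     \<Rightarrow> (halfedge \<Rightarrow> halfedge) \<Rightarrow> expl \<Rightarrow> expl" where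
  "step din dout n t rk \<omega> s =
     (if cands din dout n t s = {} then s
      else (let e = sel din dout n t rk s; f = \<omega> e in
        if f \<notin> bdry_in din n s then
          \<lparr>pairs = pairs s @ [(e, f)], tree = insert (fst f) (tree s),
           hgt = (hgt s)(fst f := hgt s (fst e) + 1),
           wgt = (wgt s)(fst f := wgt s (fst e) / real (dout (fst f)))\<rparr>
        else s\<lparr>pairs := pairs s @ [(e, f)]\<rparr>))"

definition state ::
  "(nat \<Rightarrow> nat) \<Rightarrow> (nat \<Rightarrow> nat) \<Rightarrow> nat \<Rightarrow> nat \<Rightarrow> (halfedge \<Rightarrow> nat) \<Rightarrow> nat
     \<Rightarrow> (halfedge \<Rightarrow> halfedge) \<Rightarrow> nat \<Rightarrow> expl" where
  "state din dout n t rk i \<omega> k = (step din dout n t rk \<omega> ^^ k) (init dout i)"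

definition kappa ::
  "(nat \<Rightarrow> nat) \<Rightarrow> (nat \<Rightarrow> nat) \<Rightarrow> nat \<Rightarrow> nat \<Rightarrow> (halfedge \<Rightarrow> nat) \<Rightarrow> nat
     \<Rightarrow> (halfedge \<Rightarrow> halfedge) \<Rightarrow> nat" where
  "kappa din dout n t rk i \<omega> = (LEAST k. cands din dout n t (state din dout n t rk i \<omega> k) = {})"

fun Wp ::
  "(nat \<Rightarrow> nat) \<Rightarrow> (nat \<Rightarrow> nat) \<Rightarrow> nat \<Rightarrow> nat \<Rightarrow> (halfedge \<Rightarrow> nat) \<Rightarrow> nat
     \<Rightarrow> (halfedge \<Rightarrow> halfedge) \<Rightarrow> nat \<Rightarrow> real" where
  "Wp din dout n t rk i \<omega> 0 = 0"
| "Wp din dout n t rk i \<omega> (Suc k) =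
     Wp din dout n t rk i \<omega> k +
     (let s = state din dout n t rk i \<omega> k; e = sel din dout n t rk s in
      if k < kappa din dout n t rk i \<omega> \<and> \<omega> e \<in> bdry_in din n s
      then wgt s (fst e) else 0)"

end

theory Submission
  imports Defs "HOL-Real_Asymp.Real_Asymp"
begin


locale setting =
  fixes din dout :: "nat \<Rightarrow> nat" and n t :: nat and rk :: "halfedge \<Rightarrow> nat" and i D :: nat
  assumes sums: "(\<Sum>j\<in>{1..n}. din j) = (\<Sum>j\<in>{1..n}. dout j)"
    and degs: "\<forall>j\<in>{1..n}. 2 \<le> din j \<and> 2 \<le> dout j"
    and bnd: "\<forall>j\<in>{1..n}. din j \<le> D \<and> dout j \<le> D"
    and root: "i \<in> {1..n}"
begin

abbreviation "TL \<equiv> tails dout n"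
abbreviation "HD \<equiv> heads din n"
abbreviation "Om \<equiv> Omega din dout n"
abbreviation "cnd \<equiv> cands din dout n t"
abbreviation "sl \<equiv> sel din dout n t rk"
abbreviation "stp \<equiv> step din dout n t rk"
abbreviation "st \<equiv> state din dout n t rk i"
abbreviation "kap \<equiv> kappa din dout n t rk i"
abbreviation "bin \<equiv> bdry_in din n"
abbreviation "bout \<equiv> bdry_out dout n"

lemma TL_eq: "TL = Sigma {1..n} (\<lambda>j. {..<dout j})"
  by (auto simp: tails_def)
lemma HD_eq: "HD = Sigma {1..n} (\<lambda>j. {..<din j})"
  by (auto simp: heads_def)
lemma fin_TL[simp]: "finite TL" by (simp add: TL_eq)
lemma fin_HD[simp]: "finite HD" by (simp add: HD_eq)
lemma card_TL: "card TL = (\<Sum>j\<in>{1..n}. dout j)" by (simp add: TL_eq)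
lemma card_HD: "card HD = (\<Sum>j\<in>{1..n}. din j)" by (simp add: HD_eq)
lemma card_HD_ge: "2 * n \<le> card HD"
proof -
  have "(\<Sum>j\<in>{1..n}. 2) \<le> (\<Sum>j\<in>{1..n}. din j)" using degs by (intro sum_mono) auto
  then show ?thesis by (simp add: card_HD)
qed
lemma n_pos: "1 \<le> n" using root by auto

lemma Om_nonempty: "Om \<noteq> {}"
proof -
  obtain h where h: "bij_betw h TL HD"
    using finite_same_card_bij[of TL HD] card_TL card_HD sums by auto
  have "restrict h TL \<in> Om"
    unfolding Omega_def using h by (auto simp: bij_betw_def inj_on_def)
  then show ?thesis by auto
qed
lemma fin_Om[simp]: "finite Om"
proof -
  have "Om \<subseteq> TL \<rightarrow>\<^sub>E HD" by (auto simp: Omega_def)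
  then show ?thesis using finite_PiE[of TL "\<lambda>_. HD"] by (auto intro: finite_subset)
qed

lemma Om_D: "\<omega> \<in> Om \<Longrightarrow> \<omega> \<in> TL \<rightarrow>\<^sub>E HD \<and> bij_betw \<omega> TL HD"
  by (auto simp: Omega_def)

lemma wmin_nonneg: "0 \<le> wmin n" using n_pos by (auto simp: wmin_def intro!: divide_nonneg_nonneg ln_ge_zero)

lemma cnd_sub: "cnd s \<subseteq> bout s" by (auto simp: cands_def)
lemma fin_cnd[simp]: "finite (cnd s)"
  by (rule finite_subset[of _ TL]) (auto simp: cands_def bdry_out_def)

lemma sel_prop:
  assumes "cnd s \<noteq> {}"
  shows "sl s \<in> cnd s" "\<forall>e'\<in>cnd s. wgt s (fst e') \<le> wgt s (fst (sl s))"
proof -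
  define M where "M = Max ((\<lambda>e. wgt s (fst e)) ` cnd s)"
  have "M \<in> (\<lambda>e. wgt s (fst e)) ` cnd s" unfolding M_def using assms by (intro Max_in) auto
  then obtain e0 where e0: "e0 \<in> cnd s" "wgt s (fst e0) = M" by auto
  have P: "e0 \<in> cnd s \<and> (\<forall>e'\<in>cnd s. wgt s (fst e') \<le> wgt s (fst e0))"
    using e0 unfolding M_def by auto
  have "sl s \<in> cnd s \<and> (\<forall>e'\<in>cnd s. wgt s (fst e') \<le> wgt s (fst (sl s)))"
    unfolding sel_def using arg_min_nat_lemma[where P="\<lambda>e. e \<in> cnd s \<and> (\<forall>e'\<in>cnd s. wgt s (fst e') \<le> wgt s (fst e))", OF P]
    by blast
  then show "sl s \<in> cnd s" "\<forall>e'\<in>cnd s. wgt s (fst e') \<le> wgt s (fst (sl s))" by auto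
qed

lemma step_empty: "cnd s = {} \<Longrightarrow> stp \<omega> s = s"
  by (simp add: step_def)

lemma step_new:
  "cnd s \<noteq> {} \<Longrightarrow> \<omega> (sl s) \<notin> bin s \<Longrightarrow> stp \<omega> s =
   \<lparr>pairs = pairs s @ [(sl s, \<omega> (sl s))], tree = insert (fst (\<omega> (sl s))) (tree s),
    hgt = (hgt s)(fst (\<omega> (sl s)) := hgt s (fst (sl s)) + 1),
    wgt = (wgt s)(fst (\<omega> (sl s)) := wgt s (fst (sl s)) / real (dout (fst (\<omega> (sl s)))))\<rparr>"
  by (simp add: step_def Let_def)

lemma step_coll:
  "cnd s \<noteq> {} \<Longrightarrow> \<omega> (sl s) \<in> bin s \<Longrightarrow> stp \<omega> s = s\<lparr>pairs := pairs s @ [(sl s, \<omega> (sl s))]\<rparr>"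
  by (simp add: step_def Let_def)

lemma st_0: "st \<omega> 0 = init dout i" by (simp add: state_def)
lemma st_Suc: "st \<omega> (Suc k) = stp \<omega> (st \<omega> k)" by (simp add: state_def)

definition Inv :: "(halfedge \<Rightarrow> halfedge) \<Rightarrow> expl \<Rightarrow> bool" where
  "Inv \<omega> s \<longleftrightarrow> i \<in> tree s \<and> tree s \<subseteq> {1..n} \<and>
     (\<forall>p\<in>set (pairs s). fst p \<in> TL \<and> fst (fst p) \<in> tree s \<and> snd p = \<omega> (fst p)) \<and>
     distinct (map fst (pairs s)) \<and> card (tree s) \<le> length (pairs s) + 1 \<and>
     (\<forall>e\<in>fst ` set (pairs s). \<forall>e'\<in>cnd s. wgt s (fst e') \<le> wgt s (fst e))"

lemma Inv_init: "Inv \<omega> (init dout i)"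
  using root by (auto simp: Inv_def init_def)

lemma sel_facts:
  assumes "cnd s \<noteq> {}"
  shows "sl s \<in> TL" "fst (sl s) \<in> tree s" "sl s \<notin> fst ` set (pairs s)"
    "wmin n < wgt s (fst (sl s))"
  using sel_prop(1)[OF assms] by (auto simp: cands_def bdry_out_def)

lemma omega_unmatched:
  assumes "\<omega> \<in> Om" "Inv \<omega> s" "cnd s \<noteq> {}"
  shows "\<omega> (sl s) \<in> HD" "\<omega> (sl s) \<notin> snd ` set (pairs s)"
proof -
  have b: "bij_betw \<omega> TL HD" and f: "\<omega> \<in> TL \<rightarrow>\<^sub>E HD" using Om_D[OF assms(1)] by auto
  show "\<omega> (sl s) \<in> HD" using f sel_facts(1)[OF assms(3)] by auto
  show "\<omega> (sl s) \<notin> snd ` set (pairs s)"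
  proof
    assume "\<omega> (sl s) \<in> snd ` set (pairs s)"
    then obtain p where p: "p \<in> set (pairs s)" "snd p = \<omega> (sl s)" by auto
    have "fst p \<in> TL" "snd p = \<omega> (fst p)" using assms(2) p(1) by (auto simp: Inv_def)
    then have "fst p = sl s" using b p(2) sel_facts(1)[OF assms(3)] by (auto simp: bij_betw_def inj_on_def)
    then show False using p(1) sel_facts(3)[OF assms(3)] by force
  qed
qed

lemma new_vertex:
  assumes "\<omega> \<in> Om" "Inv \<omega> s" "cnd s \<noteq> {}" "\<omega> (sl s) \<notin> bin s"
  shows "fst (\<omega> (sl s)) \<notin> tree s" "fst (\<omega> (sl s)) \<in> {1..n}"
  using omega_unmatched[OF assms(1-3)] assms(4) by (auto simp: bdry_in_def heads_def)

lemma Inv_step: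
  assumes om: "\<omega> \<in> Om" and I: "Inv \<omega> s"
  shows "Inv \<omega> (stp \<omega> s)"
proof (cases "cnd s = {}")
  case True then show ?thesis using I by (simp add: step_empty)
next
  case ne: False
  define e where "e = sl s"
  define f where "f = \<omega> e"
  define x where "x = wgt s (fst e)"
  have eT: "e \<in> TL" "fst e \<in> tree s" "e \<notin> fst ` set (pairs s)" "wmin n < x"
    using sel_facts[OF ne] by (auto simp: e_def x_def)
  have emax: "\<forall>e'\<in>cnd s. wgt s (fst e') \<le> x" using sel_prop(2)[OF ne] by (simp add: e_def x_def)
  have ecnd: "e \<in> cnd s" using sel_prop(1)[OF ne] by (simp add: e_def)
  have x0: "0 \<le> x" using eT(4) wmin_nonneg by linarith
  have fin: "finite (tree s)" using I by (auto simp: Inv_def intro: finite_subset)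
  have J: "\<forall>e1\<in>fst ` set (pairs s). \<forall>e'\<in>cnd s. wgt s (fst e') \<le> wgt s (fst e1)"
    using I by (simp add: Inv_def)
  have Je: "\<forall>e1\<in>fst ` set (pairs s). x \<le> wgt s (fst e1)" using J ecnd by (auto simp: x_def)
  show ?thesis
  proof (cases "f \<in> bin s")
    case coll: True
    have S: "stp \<omega> s = s\<lparr>pairs := pairs s @ [(e, f)]\<rparr>"
      using step_coll[OF ne] coll by (simp add: e_def f_def)
    have csub: "cnd (stp \<omega> s) \<subseteq> cnd s"
      unfolding S by (auto simp: cands_def bdry_out_def)
    show ?thesis unfolding Inv_def
    proof (intro conjI)
      show "\<forall>e1\<in>fst ` set (pairs (stp \<omega> s)). \<forall>e'\<in>cnd (stp \<omega> s). wgt (stp \<omega> s) (fst e') \<le> wgt (stp \<omega> s) (fst e1)"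
      proof (intro ballI)
        fix e1 e' assume a: "e1 \<in> fst ` set (pairs (stp \<omega> s))" "e' \<in> cnd (stp \<omega> s)"
        then have e'c: "e' \<in> cnd s" using csub by auto
        have "e1 = e \<or> e1 \<in> fst ` set (pairs s)" using a(1) unfolding S by auto
        then show "wgt (stp \<omega> s) (fst e') \<le> wgt (stp \<omega> s) (fst e1)"
          using emax e'c J unfolding S by (auto simp: x_def)
      qed
    qed (use I eT in \<open>auto simp: Inv_def S f_def\<close>)
  next
    case new: False
    define v where "v = fst f"
    have vnot: "v \<notin> tree s" and vin: "v \<in> {1..n}"
      using new_vertex[OF om I ne] new by (auto simp: v_def f_def e_def)
    have S: "stp \<omega> s = \<lparr>pairs = pairs s @ [(e, f)], tree = insert v (tree s),
        hgt = (hgt s)(v := hgt s (fst e) + 1), wgt = (wgt s)(v := x / real (dout v))\<rparr>"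
      using step_new[OF ne] new by (simp add: e_def f_def v_def x_def)
    have dv: "2 \<le> dout v" using degs vin by auto
    have csub: "\<forall>e'\<in>cnd (stp \<omega> s). (e' \<in> cnd s \<and> wgt (stp \<omega> s) (fst e') = wgt s (fst e')) \<or> fst e' = v"
    proof
      fix e' assume a: "e' \<in> cnd (stp \<omega> s)"
      show "(e' \<in> cnd s \<and> wgt (stp \<omega> s) (fst e') = wgt s (fst e')) \<or> fst e' = v"
      proof (cases "fst e' = v")
        case False
        then show ?thesis using a unfolding S by (auto simp: cands_def bdry_out_def)
      qed simp
    qed
    have xd: "x / real (dout v) \<le> x" using x0 dv by (simp add: divide_le_eq mult_le_cancel_left1)
    show ?thesis unfolding Inv_def
    proof (intro conjI)
      show "\<forall>e1\<in>fst ` set (pairs (stp \<omega> s)). \<forall>e'\<in>cnd (stp \<omega> s). wgt (stp \<omega> s) (fst e') \<le> wgt (stp \<omega> s) (fst e1)"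
      proof (intro ballI)
        fix e1 e' assume a: "e1 \<in> fst ` set (pairs (stp \<omega> s))" "e' \<in> cnd (stp \<omega> s)"
        have e1c: "e1 = e \<or> e1 \<in> fst ` set (pairs s)" using a(1) unfolding S by auto
        have e1t: "fst e1 \<in> tree s" using e1c eT I by (auto simp: Inv_def)
        then have w1: "wgt (stp \<omega> s) (fst e1) = wgt s (fst e1)" using vnot unfolding S by auto
        have x1: "x \<le> wgt s (fst e1)" using e1c Je by (auto simp: x_def)
        have "wgt (stp \<omega> s) (fst e') \<le> x"
          using csub a(2) emax xd unfolding S by auto
        then show "wgt (stp \<omega> s) (fst e') \<le> wgt (stp \<omega> s) (fst e1)" using w1 x1 by linarith
      qed
      show "card (tree (stp \<omega> s)) \<le> length (pairs (stp \<omega> s)) + 1"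
        using I fin unfolding S by (auto simp: Inv_def card_insert_if)
    qed (use I eT vin in \<open>auto simp: Inv_def S f_def\<close>)
  qed
qed

lemma Inv_st: "\<omega> \<in> Om \<Longrightarrow> Inv \<omega> (st \<omega> k)"
  by (induction k) (auto simp: st_0 st_Suc Inv_init Inv_step)

definition phi :: "real \<Rightarrow> expl \<Rightarrow> halfedge \<Rightarrow> real" where
  "phi w s e = (if e \<in> TL \<and> fst e \<in> tree s \<and> w \<le> wgt s (fst e) then
      (if e \<in> fst ` set (pairs s) then 1 else 2 * wgt s (fst e) / w - 1) else 0)"

definition Phi :: "real \<Rightarrow> expl \<Rightarrow> real" where
  "Phi w s = (\<Sum>e\<in>TL. phi w s e)"

lemma phi_nonneg: "0 < w \<Longrightarrow> 0 \<le> phi w s e"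
  by (auto simp: phi_def field_simps)

lemma Phi_step:
  assumes om: "\<omega> \<in> Om" and I: "Inv \<omega> s" and w: "0 < w"
  shows "Phi w (stp \<omega> s) \<le> Phi w s"
proof (cases "cnd s = {}")
  case True then show ?thesis by (simp add: step_empty)
next
  case ne: False
  define e where "e = sl s"
  define f where "f = \<omega> e"
  define x where "x = wgt s (fst e)"
  have eT: "e \<in> TL" "fst e \<in> tree s" "e \<notin> fst ` set (pairs s)" "wmin n < x"
    using sel_facts[OF ne] by (auto simp: e_def x_def)
  have x0: "0 \<le> x" using eT(4) wmin_nonneg by linarith
  show ?thesis
  proof (cases "f \<in> bin s")
    case coll: True
    have S: "stp \<omega> s = s\<lparr>pairs := pairs s @ [(e, f)]\<rparr>"
      using step_coll[OF ne] coll by (simp add: e_def f_def)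
    have "phi w (stp \<omega> s) e' \<le> phi w s e'" for e'
    proof (cases "e' = e")
      case True
      then show ?thesis using eT w unfolding S by (auto simp: phi_def x_def field_simps)
    qed (auto simp: phi_def S)
    then show ?thesis unfolding Phi_def by (intro sum_mono) auto
  next
    case new: False
    define v where "v = fst f"
    have vnot: "v \<notin> tree s" and vin: "v \<in> {1..n}"
      using new_vertex[OF om I ne] new by (auto simp: v_def f_def e_def)
    have S: "stp \<omega> s = \<lparr>pairs = pairs s @ [(e, f)], tree = insert v (tree s),
        hgt = (hgt s)(v := hgt s (fst e) + 1), wgt = (wgt s)(v := x / real (dout v))\<rparr>"
      using step_new[OF ne] new by (simp add: e_def f_def v_def x_def)
    have dv: "2 \<le> dout v" using degs vin by auto
    define B where "B = {e'\<in>TL. fst e' = v}"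
    have B_eq: "B = {v} \<times> {..<dout v}" using vin by (auto simp: B_def tails_def)
    have cB: "card B = dout v" by (simp add: B_eq)
    have mt: "\<forall>p\<in>set (pairs s). fst (fst p) \<in> tree s" using I by (auto simp: Inv_def)
    define s' where "s' = stp \<omega> s"
    have oldB: "\<forall>e'\<in>B. phi w s e' = 0" using vnot by (auto simp: phi_def B_def)
    define c where "c = (if w \<le> x / real (dout v) then 2 * (x / real (dout v)) / w - 1 else 0)"
    have newB: "\<forall>e'\<in>B. phi w s' e' = c"
    proof
      fix e' assume a: "e' \<in> B"
      have "e' \<notin> fst ` set (pairs s')"
        using a mt eT vnot unfolding s'_def S B_def by force
      then show "phi w s' e' = c" using a unfolding s'_def S phi_def c_def B_def by auto
    qed
    have rest: "\<forall>e'\<in>TL - B - {e}. phi w s' e' = phi w s e'"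
      unfolding s'_def S phi_def B_def by auto
    have fB: "finite B" "B \<subseteq> TL" by (auto simp: B_def)
    have eB: "e \<notin> B" using eT vnot by (auto simp: B_def)
    have dec1: "Phi w s' = phi w s' e + (\<Sum>e'\<in>TL - B - {e}. phi w s' e') + (\<Sum>e'\<in>B. phi w s' e')"
      unfolding Phi_def using fB eB eT(1)
      by (simp add: sum.subset_diff[of B TL] sum.remove[of "TL - B" e])
    have dec2: "Phi w s = phi w s e + (\<Sum>e'\<in>TL - B - {e}. phi w s e') + (\<Sum>e'\<in>B. phi w s e')"
      unfolding Phi_def using fB eB eT(1)
      by (simp add: sum.subset_diff[of B TL] sum.remove[of "TL - B" e])
    have sB: "(\<Sum>e'\<in>B. phi w s' e') = real (dout v) * c" using newB cB by simp
    have sB0: "(\<Sum>e'\<in>B. phi w s e') = 0" using oldB by simp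
    have sR: "(\<Sum>e'\<in>TL - B - {e}. phi w s' e') = (\<Sum>e'\<in>TL - B - {e}. phi w s e')"
      using rest by (intro sum.cong) auto
    have pe': "phi w s' e = (if w \<le> x then 1 else 0)"
      using eT unfolding s'_def S phi_def x_def using vnot by auto
    have pe: "phi w s e = (if w \<le> x then 2 * x / w - 1 else 0)"
      using eT unfolding phi_def x_def by auto
    have key: "phi w s' e + real (dout v) * c \<le> phi w s e"
    proof -
      have d2: "2 \<le> real (dout v)" using dv by simp
      have dpos: "0 < real (dout v)" using dv by simp
      consider "w \<le> x / real (dout v)" | "\<not> w \<le> x / real (dout v)" "w \<le> x" | "\<not> w \<le> x" by blast
      then show ?thesis
      proof cases
        case 1
        have xd: "x / real (dout v) \<le> x" using x0 dv by (simp add: divide_le_eq mult_le_cancel_left1)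
        then have wx: "w \<le> x" using 1 by linarith
        have "real (dout v) * c = 2 * x / w - real (dout v)" using 1 dpos w by (simp add: c_def field_simps)
        then show ?thesis using pe pe' wx d2 by simp
      next
        case 2
        then have "1 \<le> 2 * x / w - 1" using w by (simp add: field_simps)
        then show ?thesis using pe pe' 2 by (simp add: c_def)
      next
        case 3
        have xd: "x / real (dout v) \<le> x" using x0 dv by (simp add: divide_le_eq mult_le_cancel_left1)
        then have "\<not> w \<le> x / real (dout v)" using 3 by linarith
        then show ?thesis using pe pe' 3 by (simp add: c_def)
      qed
    qed
    show ?thesis using dec1 dec2 sB sB0 sR key unfolding s'_def[symmetric] by linarith
  qed
qed

lemma Phi_init:
  assumes w: "0 < w"
  shows "Phi w (init dout i) \<le> max 0 (2 / w - 2)"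
proof -
  define d where "d = dout i"
  have d2: "2 \<le> d" using degs root by (auto simp: d_def)
  define B where "B = {e\<in>TL. fst e = i}"
  have B_eq: "B = {i} \<times> {..<d}" using root by (auto simp: B_def tails_def d_def)
  define c where "c = (if w \<le> 1 / real d then 2 * (1 / real d) / w - 1 else 0)"
  have "Phi w (init dout i) = (\<Sum>e\<in>TL. if e \<in> B then c else 0)"
    unfolding Phi_def by (intro sum.cong) (auto simp: phi_def init_def B_def c_def d_def)
  also have "\<dots> = (\<Sum>e\<in>B. c)" by (simp add: sum.If_cases B_def Int_def)
  also have "\<dots> = real d * c" by (simp add: B_eq)
  also have "\<dots> \<le> max 0 (2 / w - 2)"
  proof (cases "w \<le> 1 / real d")
    case True
    have "real d * c = 2 / w - real d" using True d2 w by (simp add: c_def field_simps)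
    then show ?thesis using d2 by simp
  qed (simp add: c_def)
  finally show ?thesis .
qed

lemma Phi_st: "\<omega> \<in> Om \<Longrightarrow> 0 < w \<Longrightarrow> Phi w (st \<omega> k) \<le> max 0 (2 / w - 2)"
proof (induction k)
  case 0 then show ?case using Phi_init by (simp add: st_0)
next
  case (Suc k)
  then show ?case using Phi_step[OF Suc.prems(1) Inv_st[OF Suc.prems(1)], of w k] by (simp add: st_Suc)
qed

lemma Phi_lower:
  assumes I: "Inv \<omega> s" and ne: "cnd s \<noteq> {}"
  shows "real (length (pairs s)) + 1 \<le> Phi (wgt s (fst (sl s))) s"
proof -
  define e where "e = sl s"
  define x where "x = wgt s (fst e)"
  define M where "M = fst ` set (pairs s)"
  have eT: "e \<in> TL" "fst e \<in> tree s" "e \<notin> M" "wmin n < x"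
    using sel_facts[OF ne] by (auto simp: e_def x_def M_def)
  have x0: "0 < x" using eT(4) wmin_nonneg by linarith
  have ecnd: "e \<in> cnd s" using sel_prop(1)[OF ne] by (simp add: e_def)
  have MT: "M \<subseteq> TL" "\<forall>e1\<in>M. fst e1 \<in> tree s" using I by (auto simp: Inv_def M_def)
  have J: "\<forall>e1\<in>M. x \<le> wgt s (fst e1)" using I ecnd by (auto simp: Inv_def M_def x_def)
  have cM: "card M = length (pairs s)"
    using I distinct_card[of "map fst (pairs s)"] by (simp add: Inv_def M_def)
  have "(\<Sum>e'\<in>insert e M. phi x s e') = (\<Sum>e'\<in>M. phi x s e') + phi x s e"
    using eT(3) by (simp add: M_def)
  also have "(\<Sum>e'\<in>M. phi x s e') = (\<Sum>e'\<in>M. 1)"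
    using MT J by (intro sum.cong) (auto simp: phi_def M_def)
  also have "phi x s e = 1" using eT x0 by (simp add: phi_def x_def M_def)
  finally have eq: "(\<Sum>e'\<in>insert e M. phi x s e') = real (length (pairs s)) + 1" using cM by simp
  have "(\<Sum>e'\<in>insert e M. phi x s e') \<le> Phi x s"
    unfolding Phi_def using MT eT x0 by (intro sum_mono2) (auto intro: phi_nonneg)
  then show ?thesis using eq by (simp add: x_def e_def)
qed

lemma length_step: "cnd s \<noteq> {} \<Longrightarrow> length (pairs (stp \<omega> s)) = Suc (length (pairs s))"
  by (cases "\<omega> (sl s) \<in> bin s") (simp_all add: step_coll step_new)

lemma frozen: "cnd (st \<omega> k) = {} \<Longrightarrow> st \<omega> (k + j) = st \<omega> k"
  by (induction j) (auto simp: st_Suc step_empty)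

lemma length_st: "cnd (st \<omega> k) \<noteq> {} \<Longrightarrow> length (pairs (st \<omega> k)) = k"
proof (induction k)
  case 0 then show ?case by (simp add: st_0 init_def)
next
  case (Suc k)
  have ne: "cnd (st \<omega> k) \<noteq> {}"
  proof
    assume "cnd (st \<omega> k) = {}"
    then have "st \<omega> (Suc k) = st \<omega> k" by (simp add: st_Suc step_empty)
    then show False using Suc.prems \<open>cnd (st \<omega> k) = {}\<close> by simp
  qed
  then show ?case using Suc.IH length_step by (simp add: st_Suc)
qed

lemma wbound:
  assumes om: "\<omega> \<in> Om" and ne: "cnd (st \<omega> k) \<noteq> {}"
  shows "real (k + 1) * wgt (st \<omega> k) (fst (sl (st \<omega> k))) \<le> 2"
proof -
  define x where "x = wgt (st \<omega> k) (fst (sl (st \<omega> k)))"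
  have x0: "0 < x" using sel_facts(4)[OF ne] wmin_nonneg by (simp add: x_def)
  have "real k + 1 \<le> Phi x (st \<omega> k)"
    using Phi_lower[OF Inv_st[OF om] ne] length_st[OF ne] by (simp add: x_def)
  also have "\<dots> \<le> max 0 (2 / x - 2)" using Phi_st[OF om x0] .
  finally have "real k + 1 \<le> 2 / x" by linarith
  then show ?thesis using x0 by (simp add: x_def[symmetric] field_simps)
qed

lemma kap_iff:
  assumes k0: "cnd (st \<omega> k0) = {}"
  shows "j < kap \<omega> \<longleftrightarrow> cnd (st \<omega> j) \<noteq> {}"
proof
  assume "j < kap \<omega>"
  then show "cnd (st \<omega> j) \<noteq> {}" unfolding kappa_def by (rule not_less_Least)
next
  assume ne: "cnd (st \<omega> j) \<noteq> {}"
  show "j < kap \<omega>"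
  proof (rule ccontr)
    assume "\<not> j < kap \<omega>"
    then obtain d where d: "j = kap \<omega> + d" by (metis le_iff_add not_less)
    have e: "cnd (st \<omega> (kap \<omega>)) = {}" unfolding kappa_def by (rule LeastI[of _ k0]) (rule k0)
    then have "st \<omega> j = st \<omega> (kap \<omega>)" using frozen[OF e] d by simp
    then show False using ne e by simp
  qed
qed

lemma kap_le:
  assumes k0: "cnd (st \<omega> k0) = {}"
  shows "kap \<omega> \<le> k0"
  unfolding kappa_def by (rule Least_le) (rule k0)

lemma cnd_bound:
  assumes om: "\<omega> \<in> Om" and ne: "cnd (st \<omega> k) \<noteq> {}"
  shows "real (k + 1) * wmin n < 2"
proof -
  have "wmin n < wgt (st \<omega> k) (fst (sl (st \<omega> k)))" using sel_facts(4)[OF ne] .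
  then have "real (k + 1) * wmin n < real (k + 1) * wgt (st \<omega> k) (fst (sl (st \<omega> k)))"
    by (intro mult_strict_left_mono) auto
  then show ?thesis using wbound[OF om ne] by linarith
qed

abbreviation "W \<equiv> Wp din dout n t rk i"

definition coll :: "(halfedge \<Rightarrow> halfedge) \<Rightarrow> nat \<Rightarrow> bool" where
  "coll \<omega> j \<longleftrightarrow> j < kap \<omega> \<and> \<omega> (sl (st \<omega> j)) \<in> bin (st \<omega> j)"

lemma W_Suc: "W \<omega> (Suc j) = W \<omega> j + (if coll \<omega> j then wgt (st \<omega> j) (fst (sl (st \<omega> j))) else 0)"
  by (simp add: coll_def Let_def)

lemma W_tele: "W \<omega> (K + d) - W \<omega> K = (\<Sum>j\<in>{K..<K+d}. if coll \<omega> j then wgt (st \<omega> j) (fst (sl (st \<omega> j))) else 0)"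
  by (induction d) (simp_all add: W_Suc del: Wp.simps(2))

lemma W_bound:
  assumes om: "\<omega> \<in> Om" and N: "cnd (st \<omega> N) = {}"
  shows "W \<omega> (kap \<omega>) - W \<omega> K \<le> (\<Sum>j\<in>{K..<N}. if coll \<omega> j then 2 / real (j + 1) else 0)"
proof -
  have kN: "kap \<omega> \<le> N" using kap_le[OF N] .
  have inc: "(if coll \<omega> j then wgt (st \<omega> j) (fst (sl (st \<omega> j))) else 0) \<le> (if coll \<omega> j then 2 / real (j + 1) else 0)" for j
  proof (cases "coll \<omega> j")
    case True
    then have "cnd (st \<omega> j) \<noteq> {}" using kap_iff[OF N] by (simp add: coll_def)
    then have "real (j + 1) * wgt (st \<omega> j) (fst (sl (st \<omega> j))) \<le> 2" using wbound[OF om] by blast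
    then show ?thesis using True by (simp add: field_simps)
  qed simp
  have nn: "0 \<le> (\<Sum>j\<in>{K..<N}. if coll \<omega> j then 2 / real (j + 1) else 0)" by (intro sum_nonneg) auto
  show ?thesis
  proof (cases "K \<le> kap \<omega>")
    case True
    then obtain d where d: "kap \<omega> = K + d" using le_iff_add by blast
    have "W \<omega> (kap \<omega>) - W \<omega> K = (\<Sum>j\<in>{K..<kap \<omega>}. if coll \<omega> j then wgt (st \<omega> j) (fst (sl (st \<omega> j))) else 0)"
      using W_tele[of \<omega> K d] d by simp
    also have "\<dots> \<le> (\<Sum>j\<in>{K..<kap \<omega>}. if coll \<omega> j then 2 / real (j + 1) else 0)"
      by (intro sum_mono inc)
    also have "\<dots> \<le> (\<Sum>j\<in>{K..<N}. if coll \<omega> j then 2 / real (j + 1) else 0)"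
      using kN by (intro sum_mono2) auto
    finally show ?thesis .
  next
    case False
    then obtain d where d: "K = kap \<omega> + d" by (metis le_iff_add nat_le_linear)
    have "W \<omega> (kap \<omega> + d) - W \<omega> (kap \<omega>) = 0"
      unfolding W_tele by (intro sum.neutral) (auto simp: coll_def)
    then show ?thesis using d nn by simp
  qed
qed

end


context setting begin
definition Ext :: "(halfedge \<Rightarrow> halfedge) \<Rightarrow> nat \<Rightarrow> (halfedge \<Rightarrow> halfedge) set" where
  "Ext \<omega>0 j = {\<omega>\<in>Om. \<forall>e\<in>fst ` set (pairs (st \<omega>0 j)). \<omega> e = \<omega>0 e}"

lemma pairs_step_sub: "set (pairs s) \<subseteq> set (pairs (stp \<omega> s))"
  by (cases "cnd s = {}"; cases "\<omega> (sl s) \<in> bin s") (auto simp: step_empty step_coll step_new)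

lemma pairs_step_ne: "cnd s \<noteq> {} \<Longrightarrow> pairs (stp \<omega> s) = pairs s @ [(sl s, \<omega> (sl s))]"
  by (cases "\<omega> (sl s) \<in> bin s") (auto simp: step_coll step_new)

lemma step_cong: assumes "\<omega> (sl s) = \<omega>' (sl s)" shows "stp \<omega> s = stp \<omega>' s"
  unfolding step_def Let_def by (simp only: assms)

lemma st_det: "(\<forall>e\<in>fst ` set (pairs (st \<omega>0 j)). \<omega> e = \<omega>0 e) \<Longrightarrow> st \<omega> j = st \<omega>0 j"
proof (induction j)
  case 0 then show ?case by (simp add: st_0)
next
  case (Suc j)
  have sub: "set (pairs (st \<omega>0 j)) \<subseteq> set (pairs (st \<omega>0 (Suc j)))"
    using pairs_step_sub unfolding st_Suc by simp
  have "\<forall>e\<in>fst ` set (pairs (st \<omega>0 j)). \<omega> e = \<omega>0 e"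
  proof
    fix e assume "e \<in> fst ` set (pairs (st \<omega>0 j))"
    then have "e \<in> fst ` set (pairs (st \<omega>0 (Suc j)))" using sub by (rule rev_subsetD[OF _ image_mono])
    with Suc.prems show "\<omega> e = \<omega>0 e" by blast
  qed
  then have eq: "st \<omega> j = st \<omega>0 j" by (rule Suc.IH)
  show ?case
  proof (cases "cnd (st \<omega>0 j) = {}")
    case True then show ?thesis using eq by (simp add: st_Suc step_empty)
  next
    case False
    have "sl (st \<omega>0 j) \<in> fst ` set (pairs (st \<omega>0 (Suc j)))"
      unfolding st_Suc pairs_step_ne[OF False] by simp
    with Suc.prems have "\<omega> (sl (st \<omega>0 j)) = \<omega>0 (sl (st \<omega>0 j))" by blast
    then have "stp \<omega> (st \<omega>0 j) = stp \<omega>0 (st \<omega>0 j)" by (rule step_cong)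
    then show ?thesis using eq by (simp add: st_Suc)
  qed
qed

lemma Ext_st: "\<omega> \<in> Ext \<omega>0 j \<Longrightarrow> st \<omega> j = st \<omega>0 j"
  by (rule st_det) (auto simp: Ext_def)

lemma Ext_self: "\<omega>0 \<in> Om \<Longrightarrow> \<omega>0 \<in> Ext \<omega>0 j" by (simp add: Ext_def)

lemma Ext_0: "Ext \<omega>0 0 = Om" by (auto simp: Ext_def st_0 init_def)

lemma fin_Ext[simp]: "finite (Ext \<omega>0 j)" by (rule finite_subset[OF _ fin_Om]) (auto simp: Ext_def)

definition sw :: "halfedge \<Rightarrow> halfedge \<Rightarrow> halfedge \<Rightarrow> halfedge" where
  "sw f f' y = (if y = f then f' else if y = f' then f else y)"

lemma sw_sw[simp]: "sw f f' (sw f f' y) = y" by (auto simp: sw_def)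

lemma bij_sw: "f \<in> HD \<Longrightarrow> f' \<in> HD \<Longrightarrow> bij_betw (sw f f') HD HD"
  by (rule bij_betw_byWitness[where f'="sw f f'"]) (auto simp: sw_def)

lemma sw_Om:
  assumes om: "\<omega> \<in> Om" and fH: "f \<in> HD" "f' \<in> HD"
  shows "restrict (sw f f' \<circ> \<omega>) TL \<in> Om"
proof -
  have o: "\<omega> \<in> TL \<rightarrow>\<^sub>E HD" "bij_betw \<omega> TL HD" using Om_D[OF om] by auto
  have b0: "bij_betw (sw f f' \<circ> \<omega>) TL HD" using bij_betw_trans[OF o(2) bij_sw[OF fH]] .
  have b: "bij_betw (restrict (sw f f' \<circ> \<omega>) TL) TL HD"
    using b0 bij_betw_cong[of TL "restrict (sw f f' \<circ> \<omega>) TL" "sw f f' \<circ> \<omega>" HD] by simp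
  have "\<forall>x\<in>TL. sw f f' (\<omega> x) \<in> HD" using o(1) fH unfolding sw_def by auto
  then have fs: "restrict (sw f f' \<circ> \<omega>) TL \<in> TL \<rightarrow>\<^sub>E HD" by auto
  show ?thesis using b fs unfolding Omega_def by blast
qed

lemma sw_inj: "inj_on (\<lambda>\<omega>. restrict (sw f f' \<circ> \<omega>) TL) Om"
proof (rule inj_onI)
  fix \<omega>1 \<omega>2 assume a: "\<omega>1 \<in> Om" "\<omega>2 \<in> Om" "restrict (sw f f' \<circ> \<omega>1) TL = restrict (sw f f' \<circ> \<omega>2) TL"
  have ex: "\<omega>1 \<in> extensional TL" "\<omega>2 \<in> extensional TL" using Om_D[OF a(1)] Om_D[OF a(2)] by (auto simp: PiE_def)
  show "\<omega>1 = \<omega>2"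
  proof
    fix y show "\<omega>1 y = \<omega>2 y"
    proof (cases "y \<in> TL")
      case True
      have "restrict (sw f f' \<circ> \<omega>1) TL y = restrict (sw f f' \<circ> \<omega>2) TL y" using a(3) by simp
      then have "sw f f' (\<omega>1 y) = sw f f' (\<omega>2 y)" using True by simp
      then have "sw f f' (sw f f' (\<omega>1 y)) = sw f f' (sw f f' (\<omega>2 y))" by simp
      then show ?thesis by simp
    next
      case False then show ?thesis using extensional_arb[OF ex(1) False] extensional_arb[OF ex(2) False] by simp
    qed
  qed
qed

lemma swap_card_le:
  assumes om0: "\<omega>0 \<in> Om" and ne: "cnd (st \<omega>0 j) \<noteq> {}"
    and H: "f \<in> HD - snd ` set (pairs (st \<omega>0 j))" "f' \<in> HD - snd ` set (pairs (st \<omega>0 j))"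
  shows "card {\<omega>\<in>Ext \<omega>0 j. \<omega> (sl (st \<omega>0 j)) = f} \<le> card {\<omega>\<in>Ext \<omega>0 j. \<omega> (sl (st \<omega>0 j)) = f'}"
proof -
  define s where "s = st \<omega>0 j"
  define e where "e = sl s"
  have eT: "e \<in> TL" using sel_facts(1)[OF ne] by (simp add: e_def s_def)
  define \<sigma> where "\<sigma> = (\<lambda>\<omega>. restrict (sw f f' \<circ> \<omega>) TL)"
  have Is: "Inv \<omega>0 s" using Inv_st[OF om0] by (simp add: s_def)
  have fH: "f \<in> HD" "f' \<in> HD" using H by auto
  have inj: "inj_on \<sigma> {\<omega>\<in>Ext \<omega>0 j. \<omega> e = f}"
    using sw_inj[of f f'] unfolding \<sigma>_def by (rule inj_on_subset) (auto simp: Ext_def)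
  have img: "\<sigma> ` {\<omega>\<in>Ext \<omega>0 j. \<omega> e = f} \<subseteq> {\<omega>\<in>Ext \<omega>0 j. \<omega> e = f'}"
  proof
    fix \<omega>' assume "\<omega>' \<in> \<sigma> ` {\<omega>\<in>Ext \<omega>0 j. \<omega> e = f}"
    then obtain \<omega> where w: "\<omega> \<in> Ext \<omega>0 j" "\<omega> e = f" "\<omega>' = \<sigma> \<omega>" by auto
    have om: "\<omega> \<in> Om" using w(1) by (simp add: Ext_def)
    have o1: "\<omega>' \<in> Om" unfolding w(3) \<sigma>_def using sw_Om[OF om fH] .
    have agree: "\<forall>e'\<in>fst ` set (pairs s). \<omega>' e' = \<omega>0 e'"
    proof
      fix e' assume e': "e' \<in> fst ` set (pairs s)"
      then obtain p where p: "p \<in> set (pairs s)" "e' = fst p" by auto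
      have pp: "fst p \<in> TL" "snd p = \<omega>0 (fst p)" using Is p(1) by (auto simp: Inv_def)
      have eq: "\<omega> e' = \<omega>0 e'" using w(1) e' by (auto simp: Ext_def s_def)
      have m: "\<omega>0 e' \<in> snd ` set (pairs s)" using p pp by force
      have n1: "\<omega>0 e' \<noteq> f" "\<omega>0 e' \<noteq> f'" using H m by (auto simp: s_def)
      have "\<omega>' e' = sw f f' (\<omega> e')" using pp p unfolding w(3) \<sigma>_def by simp
      also have "\<dots> = \<omega>0 e'" using eq n1 by (simp add: sw_def)
      finally show "\<omega>' e' = \<omega>0 e'" .
    qed
    have "\<omega>' e = sw f f' f" using eT w(2) unfolding w(3) \<sigma>_def by simp
    then have "\<omega>' e = f'" by (simp add: sw_def)
    then show "\<omega>' \<in> {\<omega>\<in>Ext \<omega>0 j. \<omega> e = f'}"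
      using o1 agree unfolding Ext_def s_def by blast
  qed
  have "card {\<omega>\<in>Ext \<omega>0 j. \<omega> e = f} \<le> card {\<omega>\<in>Ext \<omega>0 j. \<omega> e = f'}"
    using card_inj_on_le[OF inj img] by simp
  then show ?thesis by (simp add: e_def s_def)
qed

definition coll' :: "(halfedge \<Rightarrow> halfedge) \<Rightarrow> nat \<Rightarrow> bool" where
  "coll' \<omega> k \<longleftrightarrow> cnd (st \<omega> k) \<noteq> {} \<and> \<omega> (sl (st \<omega> k)) \<in> bin (st \<omega> k)"

lemma card_bin: "Inv \<omega> s \<Longrightarrow> card (bin s) \<le> D * card (tree s)"
proof -
  assume I: "Inv \<omega> s"
  have T: "tree s \<subseteq> {1..n}" using I by (simp add: Inv_def)
  have ft: "finite (tree s)" using T by (rule finite_subset) simp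
  have "bin s \<subseteq> Sigma (tree s) (\<lambda>v. {..<din v})" by (auto simp: bdry_in_def heads_def)
  then have "card (bin s) \<le> card (Sigma (tree s) (\<lambda>v. {..<din v}))"
    using ft by (intro card_mono) auto
  also have "\<dots> = (\<Sum>v\<in>tree s. din v)" using ft by simp
  also have "\<dots> \<le> (\<Sum>v\<in>tree s. D)" using T bnd by (intro sum_mono) auto
  finally show ?thesis by (simp add: mult.commute)
qed

lemma card_tree_st: "\<omega> \<in> Om \<Longrightarrow> cnd (st \<omega> k) \<noteq> {} \<Longrightarrow> card (tree (st \<omega> k)) \<le> k + 1"
  using Inv_st[of \<omega> k] length_st[of \<omega> k] by (simp add: Inv_def)

lemma card_H: "card HD - length (pairs s) \<le> card (HD - snd ` set (pairs s))"
proof -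
  have "card HD \<le> card (HD - snd ` set (pairs s)) + card (snd ` set (pairs s))"
    by (metis card_Un_le Un_Diff_cancel2 card_mono fin_HD Un_upper1 finite_Un finite_imageI finite_set sup_commute le_trans)
  moreover have "card (snd ` set (pairs s)) \<le> length (pairs s)"
    using card_image_le[of "set (pairs s)" snd] card_length[of "pairs s"] by simp
  ultimately show ?thesis by linarith
qed

lemma Ext_split:
  assumes om0: "\<omega>0 \<in> Om" and ne: "cnd (st \<omega>0 j) \<noteq> {}" and w1: "\<omega>1 \<in> Ext \<omega>0 j"
  shows "Ext \<omega>1 (Suc j) = {\<omega>\<in>Ext \<omega>0 j. \<omega> (sl (st \<omega>0 j)) = \<omega>1 (sl (st \<omega>0 j))}"
proof -
  have s1: "st \<omega>1 j = st \<omega>0 j" using Ext_st[OF w1] .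
  have p: "pairs (st \<omega>1 (Suc j)) = pairs (st \<omega>0 j) @ [(sl (st \<omega>0 j), \<omega>1 (sl (st \<omega>0 j)))]"
    unfolding st_Suc s1 by (rule pairs_step_ne[OF ne])
  have ag: "\<forall>e\<in>fst ` set (pairs (st \<omega>0 j)). \<omega>1 e = \<omega>0 e" using w1 by (simp add: Ext_def)
  show ?thesis
    unfolding Ext_def p using ag by auto
qed

lemma core_step:
  fixes R :: "(halfedge \<Rightarrow> halfedge) \<Rightarrow> real" and x :: "nat \<Rightarrow> real"
  assumes om0: "\<omega>0 \<in> Om" and jN: "j < N" and Nn: "N \<le> n" and x: "0 \<le> x j" and P: "0 \<le> P"
    and IH: "\<forall>\<omega>1\<in>Om. (\<Sum>\<omega>\<in>Ext \<omega>1 (Suc j). R \<omega>) \<le> real (card (Ext \<omega>1 (Suc j))) * P"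
  shows "(\<Sum>\<omega>\<in>Ext \<omega>0 j. (1 + x j * (if coll' \<omega> j then 1 else 0)) * R \<omega>)
         \<le> real (card (Ext \<omega>0 j)) * ((1 + x j * (real D * real (j + 1) / real n)) * P)"
proof (cases "cnd (st \<omega>0 j) = {}")
  case True
  have c: "\<forall>\<omega>\<in>Ext \<omega>0 j. \<not> coll' \<omega> j"
  proof
    fix \<omega> assume "\<omega> \<in> Ext \<omega>0 j"
    then have "st \<omega> j = st \<omega>0 j" by (rule Ext_st)
    then show "\<not> coll' \<omega> j" using True by (simp add: coll'_def)
  qed
  have eq: "Ext \<omega>0 (Suc j) = Ext \<omega>0 j" using True by (simp add: Ext_def st_Suc step_empty)
  have "(\<Sum>\<omega>\<in>Ext \<omega>0 j. (1 + x j * (if coll' \<omega> j then 1 else 0)) * R \<omega>) = (\<Sum>\<omega>\<in>Ext \<omega>0 j. R \<omega>)"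
    using c by (intro sum.cong) auto
  also have "\<dots> \<le> real (card (Ext \<omega>0 j)) * P" using IH om0 eq by auto
  also have "\<dots> \<le> real (card (Ext \<omega>0 j)) * ((1 + x j * (real D * real (j + 1) / real n)) * P)"
  proof -
    have q0: "0 \<le> x j * (real D * real (j + 1) / real n)" using x by simp
    have "P \<le> (1 + x j * (real D * real (j + 1) / real n)) * P"
      using mult_right_mono[of 1 "1 + x j * (real D * real (j + 1) / real n)" P] P q0 by simp
    then show ?thesis by (intro mult_left_mono) auto
  qed
  finally show ?thesis .
next
  case ne: False
  define s where "s = st \<omega>0 j"
  define e where "e = sl s"
  define H where "H = HD - snd ` set (pairs s)"
  define B where "B = bin s"
  define E where "E f = {\<omega>\<in>Ext \<omega>0 j. \<omega> e = f}" for f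
  have Is: "Inv \<omega>0 s" using Inv_st[OF om0] by (simp add: s_def)
  have ne': "cnd s \<noteq> {}" using ne by (simp add: s_def)
  have f0: "\<omega>0 e \<in> H" using omega_unmatched[OF om0 Is ne'] by (simp add: H_def e_def)
  have BH: "B \<subseteq> H" by (auto simp: B_def H_def bdry_in_def)
  have finH: "finite H" by (simp add: H_def)
  define c where "c = card (E (\<omega>0 e))"
  have cE: "\<forall>f\<in>H. card (E f) = c"
  proof
    fix f assume f: "f \<in> H"
    show "card (E f) = c"
      using swap_card_le[OF om0 ne, of f "\<omega>0 e"] swap_card_le[OF om0 ne, of "\<omega>0 e" f] f f0
      unfolding c_def E_def e_def s_def H_def by simp
  qed
  have ExtU: "Ext \<omega>0 j = (\<Union>f\<in>H. E f)"
  proof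
    show "Ext \<omega>0 j \<subseteq> (\<Union>f\<in>H. E f)"
    proof
      fix \<omega> assume w: "\<omega> \<in> Ext \<omega>0 j"
      have om: "\<omega> \<in> Om" using w by (simp add: Ext_def)
      have "st \<omega> j = s" using Ext_st[OF w] by (simp add: s_def)
      then have "\<omega> e \<in> H" using omega_unmatched[OF om Inv_st[OF om, of j]] ne' by (simp add: H_def e_def)
      then show "\<omega> \<in> (\<Union>f\<in>H. E f)" using w by (auto simp: E_def)
    qed
  qed (auto simp: E_def)
  have disj: "\<forall>f\<in>H. \<forall>f'\<in>H. f \<noteq> f' \<longrightarrow> E f \<inter> E f' = {}" by (auto simp: E_def)
  have finE: "\<forall>f\<in>H. finite (E f)" by (auto simp: E_def)
  have cardExt: "card (Ext \<omega>0 j) = card H * c"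
  proof -
    have "card (\<Union>f\<in>H. E f) = (\<Sum>f\<in>H. card (E f))" using card_UN_disjoint[OF finH finE disj] .
    also have "\<dots> = (\<Sum>f\<in>H. c)" using cE by (intro sum.cong) auto
    finally show ?thesis unfolding ExtU by simp
  qed
  have collE: "\<forall>f\<in>H. \<forall>\<omega>\<in>E f. coll' \<omega> j \<longleftrightarrow> f \<in> B"
  proof (intro ballI)
    fix f \<omega> assume "f \<in> H" "\<omega> \<in> E f"
    then have w: "\<omega> \<in> Ext \<omega>0 j" "\<omega> e = f" by (auto simp: E_def)
    have "st \<omega> j = s" using Ext_st[OF w(1)] by (simp add: s_def)
    then show "coll' \<omega> j \<longleftrightarrow> f \<in> B" using w(2) ne' by (simp add: coll'_def B_def e_def)
  qed
  have sumE: "(\<Sum>\<omega>\<in>E f. R \<omega>) \<le> real (card (E f)) * P" if f: "f \<in> H" for f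
  proof (cases "E f = {}")
    case False
    then obtain \<omega>1 where w1: "\<omega>1 \<in> E f" by auto
    have w1': "\<omega>1 \<in> Ext \<omega>0 j" "\<omega>1 e = f" using w1 by (auto simp: E_def)
    have "Ext \<omega>1 (Suc j) = E f" using Ext_split[OF om0 ne w1'(1)] w1'(2) by (simp add: E_def e_def s_def)
    moreover have "\<omega>1 \<in> Om" using w1'(1) by (simp add: Ext_def)
    ultimately show ?thesis using IH by metis
  qed simp
  have h1: "(\<Sum>\<omega>\<in>Ext \<omega>0 j. (1 + x j * (if coll' \<omega> j then 1 else 0)) * R \<omega>)
      = (\<Sum>f\<in>H. \<Sum>\<omega>\<in>E f. (1 + x j * (if coll' \<omega> j then 1 else 0)) * R \<omega>)"
    unfolding ExtU by (rule sum.UNION_disjoint[OF finH finE disj])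
  have h2: "(\<Sum>f\<in>H. \<Sum>\<omega>\<in>E f. (1 + x j * (if coll' \<omega> j then 1 else 0)) * R \<omega>)
     = (\<Sum>f\<in>H. (1 + x j * (if f \<in> B then 1 else 0)) * (\<Sum>\<omega>\<in>E f. R \<omega>))"
  proof (rule sum.cong[OF refl])
    fix f assume f: "f \<in> H"
    have "(\<Sum>\<omega>\<in>E f. (1 + x j * (if coll' \<omega> j then 1 else 0)) * R \<omega>)
        = (\<Sum>\<omega>\<in>E f. (1 + x j * (if f \<in> B then 1 else 0)) * R \<omega>)"
      using collE f by (intro sum.cong refl) simp
    also have "\<dots> = (1 + x j * (if f \<in> B then 1 else 0)) * (\<Sum>\<omega>\<in>E f. R \<omega>)"
      by (rule sum_distrib_left[symmetric])
    finally show "(\<Sum>\<omega>\<in>E f. (1 + x j * (if coll' \<omega> j then 1 else 0)) * R \<omega>)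
        = (1 + x j * (if f \<in> B then 1 else 0)) * (\<Sum>\<omega>\<in>E f. R \<omega>)" .
  qed
  have h3: "(\<Sum>f\<in>H. (1 + x j * (if f \<in> B then 1 else 0)) * (\<Sum>\<omega>\<in>E f. R \<omega>))
     \<le> (\<Sum>f\<in>H. (1 + x j * (if f \<in> B then 1 else 0)) * (real c * P))"
  proof (rule sum_mono)
    fix f assume f: "f \<in> H"
    have a: "(\<Sum>\<omega>\<in>E f. R \<omega>) \<le> real c * P" using sumE[OF f] cE f by simp
    have b: "0 \<le> 1 + x j * (if f \<in> B then 1 else 0)" using x by simp
    show "(1 + x j * (if f \<in> B then 1 else 0)) * (\<Sum>\<omega>\<in>E f. R \<omega>) \<le> (1 + x j * (if f \<in> B then 1 else 0)) * (real c * P)"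
      using mult_left_mono[OF a b] .
  qed
  have ind: "(\<Sum>f\<in>H. (if f \<in> B then 1 else 0 :: real)) = real (card B)"
  proof -
    have "(\<Sum>f\<in>H. (if f \<in> B then 1 else 0 :: real)) = (\<Sum>f\<in>H \<inter> B. 1)"
      using finH by (simp add: sum.If_cases Int_def)
    also have "H \<inter> B = B" using BH by blast
    finally show ?thesis by simp
  qed
  have h4: "(\<Sum>f\<in>H. (1 + x j * (if f \<in> B then 1 else 0)) * (real c * P))
      = real c * P * (real (card H) + x j * real (card B))"
  proof -
    have "(\<Sum>f\<in>H. (1 + x j * (if f \<in> B then 1 else 0)) * (real c * P))
        = (\<Sum>f\<in>H. (1 + x j * (if f \<in> B then 1 else 0))) * (real c * P)"
      by (rule sum_distrib_right[symmetric])
    also have "(\<Sum>f\<in>H. (1 + x j * (if f \<in> B then 1 else 0))) = real (card H) + x j * real (card B)"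
      using ind by (simp add: sum.distrib sum_distrib_left[symmetric])
    finally show ?thesis by (simp add: mult_ac)
  qed
  have cB: "card B \<le> D * (j + 1)"
  proof -
    have "card B \<le> D * card (tree s)" using card_bin[OF Is] by (simp add: B_def)
    also have "\<dots> \<le> D * (j + 1)" using card_tree_st[OF om0 ne] by (intro mult_le_mono2) (simp add: s_def)
    finally show ?thesis .
  qed
  have cH: "n \<le> card H"
  proof -
    have l: "length (pairs s) = j" using length_st[OF ne] by (simp add: s_def)
    have "card HD - j \<le> card H" using card_H[of s] l by (simp add: H_def)
    then show ?thesis using card_HD_ge jN Nn by linarith
  qed
  have npos: "0 < real n" using n_pos by simp
  have BHq: "real (card B) \<le> real (card H) * (real D * real (j + 1) / real n)"
  proof -
    have "real (card B) \<le> real (D * (j + 1))" using cB by (simp only: of_nat_le_iff)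
    also have "\<dots> = real n * (real D * real (j + 1) / real n)" using npos by (simp add: field_simps)
    also have "\<dots> \<le> real (card H) * (real D * real (j + 1) / real n)"
      using cH by (intro mult_right_mono) auto
    finally show ?thesis .
  qed
  have h5: "real c * P * (real (card H) + x j * real (card B))
      \<le> real c * P * (real (card H) * (1 + x j * (real D * real (j + 1) / real n)))"
  proof -
    have "x j * real (card B) \<le> x j * (real (card H) * (real D * real (j + 1) / real n))"
      using mult_left_mono[OF BHq x] .
    moreover have "real (card H) * (1 + x j * (real D * real (j + 1) / real n))
        = real (card H) + x j * (real (card H) * (real D * real (j + 1) / real n))"
      by (simp add: algebra_simps)
    ultimately have "real (card H) + x j * real (card B) \<le> real (card H) * (1 + x j * (real D * real (j + 1) / real n))"
      by linarith
    moreover have "0 \<le> real c * P" using P by simp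
    ultimately show ?thesis by (rule mult_left_mono)
  qed
  have h6: "real c * P * (real (card H) * (1 + x j * (real D * real (j + 1) / real n)))
      = real (card (Ext \<omega>0 j)) * ((1 + x j * (real D * real (j + 1) / real n)) * P)"
    using cardExt by (simp add: mult_ac)
  show ?thesis using h1 h2 h3 h4 h5 h6 by linarith
qed

lemma core:
  fixes x :: "nat \<Rightarrow> real"
  assumes Nn: "N \<le> n" and x: "\<forall>k. 0 \<le> x k" and jN: "j \<le> N"
  shows "\<forall>\<omega>0\<in>Om. (\<Sum>\<omega>\<in>Ext \<omega>0 j. \<Prod>k\<in>{j..<N}. 1 + x k * (if coll' \<omega> k then 1 else 0))
     \<le> real (card (Ext \<omega>0 j)) * (\<Prod>k\<in>{j..<N}. 1 + x k * (real D * real (k + 1) / real n))"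
  using jN
proof (induction j rule: inc_induct)
  case base then show ?case by simp
next
  case (step j)
  show ?case
  proof
    fix \<omega>0 assume om0: "\<omega>0 \<in> Om"
    define P where "P = (\<Prod>k\<in>{Suc j..<N}. 1 + x k * (real D * real (k + 1) / real n))"
    have P0: "0 \<le> P" unfolding P_def using x by (intro prod_nonneg) auto
    have "(\<Sum>\<omega>\<in>Ext \<omega>0 j. \<Prod>k\<in>{j..<N}. 1 + x k * (if coll' \<omega> k then 1 else 0))
        = (\<Sum>\<omega>\<in>Ext \<omega>0 j. (1 + x j * (if coll' \<omega> j then 1 else 0)) *
             (\<Prod>k\<in>{Suc j..<N}. 1 + x k * (if coll' \<omega> k then 1 else 0)))"
      using step(2) by (intro sum.cong refl) (rule prod.atLeast_Suc_lessThan)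
    also have "\<dots> \<le> real (card (Ext \<omega>0 j)) * ((1 + x j * (real D * real (j + 1) / real n)) * P)"
      using core_step[OF om0 step(2) Nn _ P0, of x "\<lambda>\<omega>. \<Prod>k\<in>{Suc j..<N}. 1 + x k * (if coll' \<omega> k then 1 else 0)"]
        step(3) x unfolding P_def by blast
    also have "(1 + x j * (real D * real (j + 1) / real n)) * P
        = (\<Prod>k\<in>{j..<N}. 1 + x k * (real D * real (k + 1) / real n))"
      unfolding P_def using step(2) by (rule prod.atLeast_Suc_lessThan[symmetric])
    finally show "(\<Sum>\<omega>\<in>Ext \<omega>0 j. \<Prod>k\<in>{j..<N}. 1 + x k * (if coll' \<omega> k then 1 else 0))
     \<le> real (card (Ext \<omega>0 j)) * (\<Prod>k\<in>{j..<N}. 1 + x k * (real D * real (k + 1) / real n))" .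
  qed
qed

lemma core0:
  fixes x :: "nat \<Rightarrow> real"
  assumes Nn: "N \<le> n" and x: "\<forall>k. 0 \<le> x k"
  shows "(\<Sum>\<omega>\<in>Om. \<Prod>k\<in>{..<N}. 1 + x k * (if coll' \<omega> k then 1 else 0))
     \<le> real (card Om) * (\<Prod>k\<in>{..<N}. 1 + x k * (real D * real (k + 1) / real n))"
proof -
  obtain \<omega>0 where "\<omega>0 \<in> Om" using Om_nonempty by auto
  then show ?thesis using core[OF Nn x, of 0] by (auto simp: Ext_0 atLeast0LessThan)
qed

end



lemma exp_half_le: "0 \<le> (y::real) \<Longrightarrow> y \<le> 1 \<Longrightarrow> exp (y / 2) \<le> 1 + y"
proof -
  assume a: "0 \<le> y" "y \<le> 1"
  have "exp (y / 2) \<le> 1 + y / 2 + (y / 2)\<^sup>2" using exp_bound[of "y/2"] a by simp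
  also have "\<dots> \<le> 1 + y" using a by (simp add: power2_eq_square field_simps) (smt (verit) mult_left_le_one_le)
  finally show ?thesis .
qed

lemma prod_exp_bound:
  fixes a :: "nat \<Rightarrow> real"
  assumes "\<forall>k\<in>A. 0 \<le> a k" "finite A"
  shows "(\<Prod>k\<in>A. 1 + a k) \<le> exp (\<Sum>k\<in>A. a k)"
proof -
  have "(\<Prod>k\<in>A. 1 + a k) \<le> (\<Prod>k\<in>A. exp (a k))"
    using assms by (intro prod_mono) (auto simp: exp_ge_add_one_self)
  also have "\<dots> = exp (\<Sum>k\<in>A. a k)" using assms by (simp add: exp_sum)
  finally show ?thesis .
qed

lemma aux_eq: "0 < (r::real) \<Longrightarrow> 0 < nn \<Longrightarrow> m * (2 / r) * (d * r / nn) = 2 * m * d / nn"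
  by (simp add: field_simps)

context setting begin

definition xs :: "nat \<Rightarrow> nat \<Rightarrow> real \<Rightarrow> real \<Rightarrow> nat \<Rightarrow> real" where
  "xs K L X \<mu> k = (if k < K then 0 else if k < L then X else \<mu> * (2 / real (k + 1)))"

lemma xs_nonneg: "0 \<le> X \<Longrightarrow> 0 \<le> \<mu> \<Longrightarrow> 0 \<le> xs K L X \<mu> k"
  by (simp add: xs_def)

lemma coll_coll': "coll \<omega> j \<Longrightarrow> cnd (st \<omega> N) = {} \<Longrightarrow> coll' \<omega> j"
  using kap_iff[of \<omega> N j] by (auto simp: coll_def coll'_def)

lemma event_Z:
  assumes om: "\<omega> \<in> Om" and N: "cnd (st \<omega> N) = {}"
    and K: "2 / real (K + 1) < \<epsilon>"
    and X: "0 \<le> X" and mu: "0 \<le> \<mu>" and muL: "\<forall>k\<ge>L. \<mu> * (2 / real (k + 1)) \<le> 1"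
    and ev: "W \<omega> K + \<epsilon> \<le> W \<omega> (kap \<omega>)"
  shows "min (X\<^sup>2) (exp (\<mu> * (\<epsilon> - 2 / real (K + 1)) / 2))
     \<le> (\<Prod>k\<in>{..<N}. 1 + xs K L X \<mu> k * (if coll' \<omega> k then 1 else 0))"
proof -
  define a where "a j = 2 / real (j + 1)" for j :: nat
  define f where "f k = 1 + xs K L X \<mu> k * (if coll' \<omega> k then 1 else 0)" for k
  have f1: "1 \<le> f k" for k using xs_nonneg[OF X mu] by (simp add: f_def)
  have S0: "\<epsilon> \<le> (\<Sum>j\<in>{K..<N}. if coll \<omega> j then a j else 0)"
    using W_bound[OF om N, of K] ev unfolding a_def by linarith
  also have "\<dots> \<le> (\<Sum>j\<in>{K..<N}. if coll' \<omega> j then a j else 0)"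
    using coll_coll'[OF _ N] by (intro sum_mono) (auto simp: a_def)
  finally have S: "\<epsilon> \<le> (\<Sum>j\<in>{K..<N}. if coll' \<omega> j then a j else 0)" .
  define A where "A = {j\<in>{K..<N}. j < L \<and> coll' \<omega> j}"
  have finA: "finite A" by (simp add: A_def)
  have aK: "\<forall>j\<ge>K. a j \<le> 2 / real (K + 1)" by (auto simp: a_def frac_le)
  show ?thesis
  proof (cases "2 \<le> card A")
    case True
    obtain j1 where j1: "j1 \<in> A" using True by (metis card.empty ex_in_conv not_numeral_le_zero)
    have "1 \<le> card (A - {j1})" using True j1 finA by simp
    then obtain j2 where j2: "j2 \<in> A - {j1}" by (metis card.empty ex_in_conv not_one_le_zero)
    have fj: "f j = 1 + X" if "j \<in> A" for j using that by (simp add: A_def f_def xs_def)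
    have sub: "{j1, j2} \<subseteq> {..<N}" using j1 j2 by (auto simp: A_def)
    have "X\<^sup>2 \<le> (1 + X) * (1 + X)" using X by (simp add: power2_eq_square algebra_simps)
    also have "(1 + X) * (1 + X) = (\<Prod>k\<in>{j1, j2}. f k)" using j1 j2 fj by auto
    also have "\<dots> \<le> (\<Prod>k\<in>{..<N}. f k)"
      using sub f1 by (intro prod_mono2) (auto intro: order_trans[OF zero_le_one])
    finally show ?thesis unfolding f_def by linarith
  next
    case False
    then have cA: "card A \<le> 1" by simp
    define B where "B = {j\<in>{K..<N}. L \<le> j}"
    have split: "(\<Sum>j\<in>{K..<N}. if coll' \<omega> j then a j else 0)
        = (\<Sum>j\<in>A. a j) + (\<Sum>j\<in>B. if coll' \<omega> j then a j else 0)"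
    proof -
      have "(\<Sum>j\<in>{K..<N}. if coll' \<omega> j then a j else 0)
          = (\<Sum>j\<in>{j\<in>{K..<N}. j < L}. if coll' \<omega> j then a j else 0) + (\<Sum>j\<in>B. if coll' \<omega> j then a j else 0)"
        unfolding B_def by (subst sum.union_disjoint[symmetric]) (auto intro: sum.cong)
      also have "(\<Sum>j\<in>{j\<in>{K..<N}. j < L}. if coll' \<omega> j then a j else 0) = (\<Sum>j\<in>A. a j)"
        unfolding A_def by (simp add: sum.inter_filter[symmetric])
      finally show ?thesis .
    qed
    have "(\<Sum>j\<in>A. a j) \<le> (\<Sum>j\<in>A. 2 / real (K + 1))" using aK by (intro sum_mono) (auto simp: A_def)
    also have "\<dots> = real (card A) * (2 / real (K + 1))" by simp
    also have "\<dots> \<le> 2 / real (K + 1)" using mult_right_mono[of "real (card A)" 1 "2 / real (K+1)"] cA by simp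
    finally have sA: "(\<Sum>j\<in>A. a j) \<le> 2 / real (K + 1)" .
    have sB: "\<epsilon> - 2 / real (K + 1) \<le> (\<Sum>j\<in>B. if coll' \<omega> j then a j else 0)"
      using S split sA by linarith
    have fB: "\<forall>j\<in>B. exp (\<mu> * (if coll' \<omega> j then a j else 0) / 2) \<le> f j"
    proof
      fix j assume j: "j \<in> B"
      have xj: "xs K L X \<mu> j = \<mu> * a j" using j by (auto simp: B_def xs_def a_def)
      have y1: "\<mu> * a j \<le> 1" using muL j by (auto simp: B_def a_def)
      have y0: "0 \<le> \<mu> * a j" using mu by (simp add: a_def)
      show "exp (\<mu> * (if coll' \<omega> j then a j else 0) / 2) \<le> f j"
        using exp_half_le[OF y0 y1] xj by (simp add: f_def)
    qed
    have "exp (\<mu> * (\<epsilon> - 2 / real (K + 1)) / 2) \<le> exp (\<mu> * (\<Sum>j\<in>B. if coll' \<omega> j then a j else 0) / 2)"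
      using sB mu by (simp add: mult_left_mono divide_right_mono)
    also have "\<dots> = (\<Prod>j\<in>B. exp (\<mu> * (if coll' \<omega> j then a j else 0) / 2))"
      by (simp add: exp_sum[symmetric] sum_distrib_left sum_divide_distrib B_def)
    also have "\<dots> \<le> (\<Prod>j\<in>B. f j)" using fB by (intro prod_mono) auto
    also have "\<dots> \<le> (\<Prod>k\<in>{..<N}. f k)"
      using f1 by (intro prod_mono2) (auto simp: B_def intro: order_trans[OF zero_le_one])
    finally show ?thesis unfolding f_def by linarith
  qed
qed

lemma sum_xq:
  assumes X: "0 \<le> X" and mu: "0 \<le> \<mu>"
  shows "(\<Sum>k\<in>{..<N}. xs K L X \<mu> k * (real D * real (k + 1) / real n))
      \<le> X * real D * (real L)\<^sup>2 / real n + 2 * \<mu> * real D * real N / real n"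
proof -
  have npos: "0 < real n" using n_pos by simp
  have pt: "xs K L X \<mu> k * (real D * real (k + 1) / real n)
      \<le> (if k < L then X * real D * real L / real n else 0) + 2 * \<mu> * real D / real n" for k
  proof (cases "k < K")
    case True then show ?thesis using X mu npos by (simp add: xs_def)
  next
    case nK: False
    show ?thesis
    proof (cases "k < L")
      case True
      have "X * (real D * real (k + 1)) \<le> X * (real D * real L)"
        using True X by (intro mult_left_mono) auto
      then have "xs K L X \<mu> k * (real D * real (k + 1) / real n) \<le> X * real D * real L / real n"
        using nK True npos by (simp add: xs_def divide_right_mono mult.assoc)
      moreover have "0 \<le> 2 * \<mu> * real D / real n" using mu by simp
      ultimately show ?thesis using True by simp
    next
      case False
      have "\<mu> * (2 / real (k + 1)) * (real D * real (k + 1) / real n) = 2 * \<mu> * real D / real n"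
        using aux_eq[of "real (k+1)" "real n" \<mu> "real D"] npos by simp
      then show ?thesis using nK False by (simp add: xs_def mult_ac)
    qed
  qed
  have "(\<Sum>k\<in>{..<N}. xs K L X \<mu> k * (real D * real (k + 1) / real n))
      \<le> (\<Sum>k\<in>{..<N}. (if k < L then X * real D * real L / real n else 0) + 2 * \<mu> * real D / real n)"
    by (intro sum_mono pt)
  also have "\<dots> = (\<Sum>k\<in>{..<N}. (if k < L then X * real D * real L / real n else 0)) + real N * (2 * \<mu> * real D / real n)"
    by (simp add: sum.distrib)
  also have "(\<Sum>k\<in>{..<N}. (if k < L then X * real D * real L / real n else 0)) \<le> (\<Sum>k\<in>{..<L}. X * real D * real L / real n)"
  proof -
    have "(\<Sum>k\<in>{..<N}. (if k < L then X * real D * real L / real n else 0)) = (\<Sum>k\<in>{..<N} \<inter> {..<L}. X * real D * real L / real n)"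
      by (simp add: sum.If_cases Int_def)
    also have "\<dots> \<le> (\<Sum>k\<in>{..<L}. X * real D * real L / real n)"
      using X npos by (intro sum_mono2) auto
    finally show ?thesis .
  qed
  also have "(\<Sum>k\<in>{..<L}. X * real D * real L / real n) = X * real D * (real L)\<^sup>2 / real n"
    by (simp add: power2_eq_square)
  finally show ?thesis by (simp add: field_simps)
qed

lemma prob_locale:
  assumes Nn: "N \<le> n" and Nw: "2 \<le> real (N + 1) * wmin n"
    and K: "2 / real (K + 1) < \<epsilon>"
    and X: "0 \<le> X" and mu: "0 \<le> \<mu>" and muL: "\<forall>k\<ge>L. \<mu> * (2 / real (k + 1)) \<le> 1"
    and T: "T = min (X\<^sup>2) (exp (\<mu> * (\<epsilon> - 2 / real (K + 1)) / 2))" and Tpos: "0 < T"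
  shows "measure_pmf.prob (pmf_of_set Om) {\<omega>. W \<omega> (kap \<omega>) \<ge> W \<omega> K + \<epsilon>}
     \<le> exp (X * real D * (real L)\<^sup>2 / real n + 2 * \<mu> * real D * real N / real n) / T"
proof -
  define Z where "Z \<omega> = (\<Prod>k\<in>{..<N}. 1 + xs K L X \<mu> k * (if coll' \<omega> k then 1 else 0))" for \<omega>
  define Ev where "Ev = Om \<inter> {\<omega>. W \<omega> (kap \<omega>) \<ge> W \<omega> K + \<epsilon>}"
  have cN: "cnd (st \<omega> N) = {}" if "\<omega> \<in> Om" for \<omega>
    using cnd_bound[OF that, of N] Nw by (auto simp: mult.commute)
  have Z0: "0 \<le> Z \<omega>" for \<omega> unfolding Z_def using xs_nonneg[OF X mu] by (intro prod_nonneg) auto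
  have TZ: "\<forall>\<omega>\<in>Ev. T \<le> Z \<omega>"
    using event_Z[OF _ cN K X mu muL] unfolding Ev_def Z_def T by auto
  have finEv: "finite Ev" by (simp add: Ev_def)
  have "real (card Ev) * T = (\<Sum>\<omega>\<in>Ev. T)" by simp
  also have "\<dots> \<le> (\<Sum>\<omega>\<in>Ev. Z \<omega>)" using TZ by (intro sum_mono) auto
  also have "\<dots> \<le> (\<Sum>\<omega>\<in>Om. Z \<omega>)" using Z0 by (intro sum_mono2) (auto simp: Ev_def)
  also have "\<dots> \<le> real (card Om) * (\<Prod>k\<in>{..<N}. 1 + xs K L X \<mu> k * (real D * real (k + 1) / real n))"
    unfolding Z_def using core0[OF Nn, of "xs K L X \<mu>"] xs_nonneg[OF X mu] by blast
  also have "\<dots> \<le> real (card Om) * exp (\<Sum>k\<in>{..<N}. xs K L X \<mu> k * (real D * real (k + 1) / real n))"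
    using xs_nonneg[OF X mu] by (intro mult_left_mono prod_exp_bound) auto
  also have "\<dots> \<le> real (card Om) * exp (X * real D * (real L)\<^sup>2 / real n + 2 * \<mu> * real D * real N / real n)"
    using sum_xq[OF X mu, of K L N] by (intro mult_left_mono) auto
  finally have main: "real (card Ev) * T \<le> real (card Om) * exp (X * real D * (real L)\<^sup>2 / real n + 2 * \<mu> * real D * real N / real n)" .
  have cOm: "0 < real (card Om)" using Om_nonempty by (simp add: card_gt_0_iff)
  have "measure_pmf.prob (pmf_of_set Om) {\<omega>. W \<omega> (kap \<omega>) \<ge> W \<omega> K + \<epsilon>} = real (card Ev) / real (card Om)"
    using measure_pmf_of_set[OF Om_nonempty fin_Om] by (simp add: Ev_def)
  also have "\<dots> \<le> exp (X * real D * (real L)\<^sup>2 / real n + 2 * \<mu> * real D * real N / real n) / T"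
    using main cOm Tpos by (simp add: field_simps)
  finally show ?thesis .
qed

end



lemma aux2: "(4 * a / e) * (2 / r) = 8 * (a::real) / (e * r)"
  by (simp add: field_simps)

lemma per_n:
  fixes din dout :: "nat \<Rightarrow> nat" and n t :: nat and rk :: "halfedge \<Rightarrow> nat" and i D :: nat
    and \<epsilon> \<eta> \<delta> :: real and K :: nat
  assumes S: "setting din dout n i D"
    and K: "K = nat \<lfloor>2 / \<epsilon>\<rfloor>" and eps: "0 < \<epsilon>" and eta: "\<eta> = \<epsilon> - 2 / real (K + 1)" "0 < \<eta>"
    and c1: "3 \<le> n"
    and c2: "2 * real n / ln (real n) + 1 \<le> real n"
    and c3: "real n powr (3/4) * real D * (8 * ln (real n) / \<eta> + 1)^2 / real n \<le> 1"
    and c4: "8 * real D * ln (real n) / (\<eta> * real n) \<le> 1"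
    and c5: "exp (16 * real D / \<eta> + 2) / \<delta> \<le> sqrt (real n)" and d: "0 < \<delta>"
  shows "measure_pmf.prob (pmf_of_set (Omega din dout n))
             {\<omega>. Wp din dout n t rk i \<omega> (kappa din dout n t rk i \<omega>)
                  \<ge> Wp din dout n t rk i \<omega> (nat \<lfloor>2 / \<epsilon>\<rfloor>) + \<epsilon>} \<le> \<delta> / real n"
proof -
  interpret setting din dout n t rk i D by (rule S)
  have npos: "0 < real n" using c1 by simp
  have lnpos: "0 < ln (real n)" using c1 by simp
  have Kc: "2 / real (K + 1) < \<epsilon>" using eta by simp
  define N where "N = nat \<lfloor>2 * real n / ln (real n)\<rfloor> + 1"
  define L where "L = nat \<lceil>8 * ln (real n) / \<eta>\<rceil>"
  define X where "X = real n powr (3/4)"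
  define \<mu> where "\<mu> = 4 * ln (real n) / \<eta>"
  define T where "T = min (X\<^sup>2) (exp (\<mu> * (\<epsilon> - 2 / real (K + 1)) / 2))"
  have q0: "0 \<le> 2 * real n / ln (real n)" using npos lnpos by simp
  have N1: "real N \<le> 2 * real n / ln (real n) + 1"
    unfolding N_def using q0 by (simp add: of_nat_nat)
  have N2: "2 * real n / ln (real n) \<le> real N + 1"
    unfolding N_def using q0 by (simp add: of_nat_nat) linarith
  have Nn: "N \<le> n" using N1 c2 by linarith
  have Nw: "2 \<le> real (N + 1) * wmin n"
  proof -
    have "2 * real n \<le> (real N + 1) * ln (real n)" using N2 lnpos by (simp add: divide_le_eq)
    then show ?thesis using npos by (simp add: wmin_def field_simps)
  qed
  have l0: "0 \<le> 8 * ln (real n) / \<eta>" using lnpos eta by simp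
  have L1: "8 * ln (real n) / \<eta> \<le> real L" unfolding L_def using l0 by (simp add: of_nat_nat)
  have L2: "real L \<le> 8 * ln (real n) / \<eta> + 1" unfolding L_def using l0 by (simp add: of_nat_nat)
  have X0: "0 \<le> X" by (simp add: X_def)
  have mu0: "0 \<le> \<mu>" using lnpos eta by (simp add: \<mu>_def)
  have muL: "\<forall>k\<ge>L. \<mu> * (2 / real (k + 1)) \<le> 1"
  proof (intro allI impI)
    fix k assume k: "L \<le> k"
    have "8 * ln (real n) / \<eta> \<le> real (k + 1)" using L1 k by simp
    then have "8 * ln (real n) \<le> \<eta> * real (k + 1)" using eta by (simp add: divide_le_eq mult.commute)
    have pos: "0 < \<eta> * real (k + 1)" using eta by simp
    have "\<mu> * (2 / real (k + 1)) = 8 * ln (real n) / (\<eta> * real (k + 1))"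
      unfolding \<mu>_def by (rule aux2)
    then show "\<mu> * (2 / real (k + 1)) \<le> 1" using pos \<open>8 * ln (real n) \<le> \<eta> * real (k + 1)\<close> by simp
  qed
  have X2: "X\<^sup>2 = real n powr (3/2)"
    unfolding X_def power2_eq_square by (simp add: powr_add[symmetric])
  have E2: "exp (\<mu> * (\<epsilon> - 2 / real (K + 1)) / 2) = real n powr 2"
  proof -
    have "\<mu> * (\<epsilon> - 2 / real (K + 1)) / 2 = 2 * ln (real n)" using eta by (simp add: \<mu>_def)
    then show ?thesis using npos by (simp add: powr_def)
  qed
  have p32: "real n powr (3/2) \<le> real n powr 2" using c1 by (intro powr_mono) auto
  have T32: "T = real n powr (3/2)" unfolding T_def X2 E2 using p32 by simp
  have Tpos: "0 < T" using T32 npos by simp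
  have P: "measure_pmf.prob (pmf_of_set Om) {\<omega>. W \<omega> (kap \<omega>) \<ge> W \<omega> K + \<epsilon>}
     \<le> exp (X * real D * (real L)\<^sup>2 / real n + 2 * \<mu> * real D * real N / real n) / T"
    by (rule prob_locale[OF Nn Nw Kc X0 mu0 muL T_def Tpos])
  have A1: "X * real D * (real L)\<^sup>2 / real n \<le> 1"
  proof -
    have "(real L)\<^sup>2 \<le> (8 * ln (real n) / \<eta> + 1)\<^sup>2" using L2 by (intro power_mono) auto
    then have "X * real D * (real L)\<^sup>2 / real n \<le> X * real D * (8 * ln (real n) / \<eta> + 1)\<^sup>2 / real n"
      using X0 npos by (intro divide_right_mono mult_left_mono) auto
    then show ?thesis using c3 by (simp add: X_def)
  qed
  have A2: "2 * \<mu> * real D * real N / real n \<le> 16 * real D / \<eta> + 1"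
  proof -
    have "2 * \<mu> * real D * real N / real n \<le> 2 * \<mu> * real D * (2 * real n / ln (real n) + 1) / real n"
      using N1 mu0 npos by (intro divide_right_mono mult_left_mono) auto
    also have "\<dots> = 16 * real D / \<eta> + 8 * real D * ln (real n) / (\<eta> * real n)"
      using npos lnpos eta by (simp add: \<mu>_def field_simps)
    finally show ?thesis using c4 by linarith
  qed
  have "exp (X * real D * (real L)\<^sup>2 / real n + 2 * \<mu> * real D * real N / real n) / T
      \<le> exp (16 * real D / \<eta> + 2) / T"
    using A1 A2 Tpos by (intro divide_right_mono) auto
  also have "\<dots> \<le> \<delta> / real n"
  proof -
    have s: "real n powr (3/2) = real n * sqrt (real n)"
    proof -
      have "real n powr (3/2) = real n powr (1 + 1/2)" by simp
      also have "\<dots> = real n powr 1 * real n powr (1/2)" by (rule powr_add)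
      also have "\<dots> = real n * sqrt (real n)" using npos by (simp add: powr_half_sqrt)
      finally show ?thesis .
    qed
    have "exp (16 * real D / \<eta> + 2) \<le> \<delta> * sqrt (real n)" using c5 d by (simp add: divide_le_eq mult.commute)
    then show ?thesis unfolding T32 s using npos by (simp add: field_simps)
  qed
  finally show ?thesis using P K by simp
qed


theorem proposition5:
  fixes din dout :: "nat \<Rightarrow> nat \<Rightarrow> nat"
    and t :: "nat \<Rightarrow> nat"
    and rk :: "nat \<Rightarrow> halfedge \<Rightarrow> nat"
    and D :: nat
    and \<epsilon> :: real
  assumes "\<forall>n. (\<Sum>i\<in>{1..n}. din n i) = (\<Sum>i\<in>{1..n}. dout n i)"
    and "\<forall>n. \<forall>i\<in>{1..n}. 2 \<le> din n i \<and> 2 \<le> dout n i"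
    and "\<forall>n. \<forall>i\<in>{1..n}. din n i \<le> D \<and> dout n i \<le> D"
    and "\<forall>n. 0 < t n"
    and "\<forall>n. inj (rk n)"
    and "0 < \<epsilon>"
  shows "\<forall>\<delta>>0. \<forall>\<^sub>F n in sequentially. \<forall>i\<in>{1..n}.
           measure_pmf.prob (pmf_of_set (Omega (din n) (dout n) n))
             {\<omega>. Wp (din n) (dout n) n (t n) (rk n) i \<omega> (kappa (din n) (dout n) n (t n) (rk n) i \<omega>)
                  \<ge> Wp (din n) (dout n) n (t n) (rk n) i \<omega> (nat \<lfloor>2 / \<epsilon>\<rfloor>) + \<epsilon>}
           \<le> \<delta> / real n"
proof (intro allI impI)
  fix \<delta> :: real assume d: "0 < \<delta>"
  define K where "K = nat \<lfloor>2 / \<epsilon>\<rfloor>"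
  define \<eta> where "\<eta> = \<epsilon> - 2 / real (K + 1)"
  have eps: "0 < \<epsilon>" using assms(6) .
  have eta: "0 < \<eta>"
  proof -
    have "2 / \<epsilon> < real (K + 1)" unfolding K_def by linarith
    then have "2 < \<epsilon> * real (K + 1)" using eps by (simp add: divide_less_eq mult.commute)
    then have "2 / real (K + 1) < \<epsilon>" by (simp add: divide_less_eq mult.commute)
    then show ?thesis by (simp add: \<eta>_def)
  qed
  have e1: "\<forall>\<^sub>F n in sequentially. 3 \<le> n" by (rule eventually_ge_at_top)
  have e2: "\<forall>\<^sub>F n in sequentially. 2 * real n / ln (real n) + 1 \<le> real n" by real_asymp
  have l3: "((\<lambda>n. real n powr (3/4) * real D * (8 * ln (real n) / \<eta> + 1)^2 / real n) \<longlongrightarrow> 0) sequentially"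
    using eta by real_asymp
  have e3: "\<forall>\<^sub>F n in sequentially. real n powr (3/4) * real D * (8 * ln (real n) / \<eta> + 1)^2 / real n \<le> 1"
    using order_tendstoD(2)[OF l3, of 1] by (auto elim: eventually_mono)
  have l4: "((\<lambda>n. 8 * real D * ln (real n) / (\<eta> * real n)) \<longlongrightarrow> 0) sequentially"
    using eta by real_asymp
  have e4: "\<forall>\<^sub>F n in sequentially. 8 * real D * ln (real n) / (\<eta> * real n) \<le> 1"
    using order_tendstoD(2)[OF l4, of 1] by (auto elim: eventually_mono)
  have l5: "filterlim (\<lambda>n. sqrt (real n)) at_top sequentially" by real_asymp
  have e5: "\<forall>\<^sub>F n in sequentially. exp (16 * real D / \<eta> + 2) / \<delta> \<le> sqrt (real n)"
    using l5 by (simp add: filterlim_at_top)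
  show "\<forall>\<^sub>F n in sequentially. \<forall>i\<in>{1..n}.
           measure_pmf.prob (pmf_of_set (Omega (din n) (dout n) n))
             {\<omega>. Wp (din n) (dout n) n (t n) (rk n) i \<omega> (kappa (din n) (dout n) n (t n) (rk n) i \<omega>)
                  \<ge> Wp (din n) (dout n) n (t n) (rk n) i \<omega> (nat \<lfloor>2 / \<epsilon>\<rfloor>) + \<epsilon>}
           \<le> \<delta> / real n"
    using e1 e2 e3 e4 e5
  proof eventually_elim
    case (elim n)
    show ?case
    proof
      fix i assume i: "i \<in> {1..n}"
      have S: "setting (din n) (dout n) n i D"
        using assms(1-3) i by (unfold_locales) auto
      show "measure_pmf.prob (pmf_of_set (Omega (din n) (dout n) n))
             {\<omega>. Wp (din n) (dout n) n (t n) (rk n) i \<omega> (kappa (din n) (dout n) n (t n) (rk n) i \<omega>)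
                  \<ge> Wp (din n) (dout n) n (t n) (rk n) i \<omega> (nat \<lfloor>2 / \<epsilon>\<rfloor>) + \<epsilon>}
           \<le> \<delta> / real n"
        by (rule per_n[OF S K_def eps \<eta>_def eta elim d])
    qed
  qed
qed


end
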